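(* For every target rate $r>0$, $P_{\rm r}>0$ and $\mathcal C_x\in[0,1)$, writing $\beta=\frac{\Psi_r(\mathcal C_x)}{P_{\rm r}\theta_{\rm rd}(1-\mathcal C_x^2)}$, \[ \mathcal P_{\rm rd}(P_{\rm r},\mathcal C_x)=1-\frac{e^{-\beta}}{\Gamma(m_{\rm sd})\theta_{\rm sd}^{m_{\rm sd}}}\sum_{m=0}^{m_{\rm rd}-1}\sum_{k=0}^m\binom{m}{k}\frac{P_{\rm s}^k\,\Gamma(k+m_{\rm sd})\,\beta^m}{\Gamma(m+1)\left(P_{\rm s}\beta+\frac1{\theta_{\rm sd}}\right)^{k+m_{\rm sd}}}. \]
   Context: Let $P_{\rm s}>0$, $P_{\rm r}>0$ be the source and relay transmit powers. For links $ij\in\{\mathrm{rd},\mathrm{sd}\}$ let $g_{ij}$ be independent random channel gains, $g_{ij}$ gamma distributed with integer shape parameter $m_{ij}\ge1$ and scale $\theta_{ij}=\pi_{ij}/m_{ij}$, $\pi_{ij}=\mathbb E[g_{ij}]>0$; i.e. density $x^{m_{ij}-1}e^{-x/\theta_{ij}}/(\Gamma(m_{ij})\theta_{ij}^{m_{ij}})$, $x\ge0$. For $\mathcal C_x\in[0,1)$ define $R_{\rm rd}(P_{\rm r},\mathcal C_x)=\tfrac12\log_2\frac{(P_{\rm r}g_{\rm rd}+P_{\rm s}g_{\rm sd}+1)^2-(P_{\rm r}g_{\rm rd}\mathcal C_x)^2}{(P_{\rm s}g_{\rm sd}+1)^2}$. For a target rate $r>0$ put $\gamma=2^{2r}-1$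 and $\Psi_r(x)=\sqrt{1+\gamma(1-x^2)}-1$. The R–D outage probability is $\mathcal P_{\rm rd}=\mathbb P\{R_{\rm rd}<r\}$. *)

theory Defs
  imports "HOL-Probability.Probability"
begin

definition gamma_density :: "nat \<Rightarrow> real \<Rightarrow> real \<Rightarrow> real" where
  "gamma_density m \<theta> x =
     (if 0 \<le> x then x ^ (m - 1) * exp (- x / \<theta>) / (Gamma (real m) * \<theta> ^ m) else 0)"

definition R_rd :: "real \<Rightarrow> real \<Rightarrow> real \<Rightarrow> real \<Rightarrow> real \<Rightarrow> real" where
  "R_rd P_s P_r C_x g_rd g_sd =
     1/2 * log 2 (((P_r * g_rd + P_s * g_sd + 1)^2 - (P_r * g_rd * C_x)^2) / (P_s * g_sd + 1)^2)"

definition gamma_r :: "real \<Rightarrow> real" where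
  "gamma_r r = 2 powr (2 * r) - 1"

definition Psi :: "real \<Rightarrow> real \<Rightarrow> real" where
  "Psi r x = sqrt (1 + gamma_r r * (1 - x^2)) - 1"

end

theory Submission imports Defs begin

lemma key_quad:
  fixes u D g :: real
  assumes "D > 0" "u \<ge> 0" "g > 0"
  shows "(1+u)^2 - u^2*(1-D) < 1 + g \<longleftrightarrow> u < (sqrt (1 + g*D) - 1)/D"
proof -
  have "0 \<le> g*D" using assms by simp
  hence s0: "sqrt (1+g*D) \<ge> 0" by simp
  have "0 \<le> g*D" using assms by simp
  hence ss: "(sqrt (1+g*D))^2 = 1+g*D" by simp
  have "u < (sqrt (1 + g*D) - 1)/D \<longleftrightarrow> D*u + 1 < sqrt (1+g*D)"
    using assms by (simp add: field_simps)
  also have "\<dots> \<longleftrightarrow> (D*u+1)^2 < (sqrt (1+g*D))^2"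
  proof
    have "0 \<le> D*u + 1" using assms by simp
    thus "D*u + 1 < sqrt (1+g*D) \<Longrightarrow> (D*u+1)^2 < (sqrt (1+g*D))^2"
      by (intro power_strict_mono) auto
    show "(D*u+1)^2 < (sqrt (1+g*D))^2 \<Longrightarrow> D*u + 1 < sqrt (1+g*D)"
      using power_less_imp_less_base[OF _ s0] by blast
  qed
  also have "\<dots> \<longleftrightarrow> D*(D*u^2 + 2*u) < D*g" unfolding ss by (simp add: power2_eq_square algebra_simps)
  also have "\<dots> \<longleftrightarrow> D*u^2 + 2*u < g" using assms by simp
  also have "\<dots> \<longleftrightarrow> (1+u)^2 - u^2*(1-D) < 1 + g" by (simp add: power2_eq_square algebra_simps)
  finally show ?thesis by simp
qed

lemma key_R:
  fixes x y Ps Pr C r :: real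
  assumes "x \<ge> 0" "y \<ge> 0" "Ps > 0" "Pr > 0" "0 \<le> C" "C < 1" "r > 0"
  shows "R_rd Ps Pr C x y < r \<longleftrightarrow> x < (Ps*y+1) * Psi r C / (Pr*(1-C^2))"
proof -
  define a where "a = Pr*x"
  define b where "b = Ps*y+1"
  define D where "D = 1 - C^2"
  define u where "u = a/b"
  have "Ps*y \<ge> 0" using assms by simp
  hence b0: "b > 0" by (simp add: b_def)
  have a0: "a \<ge> 0" using assms by (simp add: a_def)
  have "C*C \<le> C*1" using assms by (intro mult_left_mono) auto
  hence D0: "D > 0" using assms unfolding D_def by (simp add: power2_eq_square)
  have g0: "gamma_r r > 0" using assms unfolding gamma_r_def using powr_less_mono[of 0 "2*r" "2::real"] by simp 
  have u0: "u \<ge> 0" using a0 b0 by (simp add: u_def)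
  have q: "((a + b)^2 - (a*C)^2)/b^2 = (1+u)^2 - u^2*(1-D)"
    using b0 by (simp add: u_def D_def field_simps power2_eq_square)
  have qe: "(1+u)^2 - u^2*(1-D) = 1 + 2*u + D*u^2" by (simp add: power2_eq_square algebra_simps)
  have "D*u^2 \<ge> 0" using D0 by simp
  hence qpos: "(1+u)^2 - u^2*(1-D) > 0" using u0 qe by linarith
  have "R_rd Ps Pr C x y = 1/2 * log 2 ((1+u)^2 - u^2*(1-D))"
    unfolding R_rd_def using q by (simp add: a_def b_def add.commute add.left_commute)
  hence "R_rd Ps Pr C x y < r \<longleftrightarrow> log 2 ((1+u)^2 - u^2*(1-D)) < 2*r" by linarith
  also have "\<dots> \<longleftrightarrow> (1+u)^2 - u^2*(1-D) < 2 powr (2*r)"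
    using qpos by (simp add: log_less_iff)
  also have "\<dots> \<longleftrightarrow> (1+u)^2 - u^2*(1-D) < 1 + gamma_r r" by (simp add: gamma_r_def)
  also have "\<dots> \<longleftrightarrow> u < (sqrt (1 + gamma_r r*D) - 1)/D" by (rule key_quad[OF D0 u0 g0])
  also have PsiD: "sqrt (1 + gamma_r r*D) - 1 = Psi r C" by (simp add: Psi_def D_def)
  also have "u < Psi r C / D \<longleftrightarrow> a < b * Psi r C / D"
    unfolding u_def using b0 D0 by (simp add: field_simps)
  also have "\<dots> \<longleftrightarrow> x < b * Psi r C / (Pr*D)"
    unfolding a_def using D0 assms by (simp add: field_simps)
  finally show ?thesis by (simp add: b_def D_def)
qed

lemma erlang_tail:
  fixes l T :: real
  assumes l: "0 < l" and T: "0 \<le> T"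
  shows "(\<integral>\<^sup>+x. ennreal (erlang_density k l x) * indicator {T..} x \<partial>lborel)
         = ennreal (\<Sum>n\<le>k. (l*T)^n * exp(-(l*T))/fact n)"
proof -
  define S where "S = (\<Sum>n\<le>k. (l*T)^n * exp(-(l*T))/fact n)"
  have tot: "(\<integral>\<^sup>+x. ennreal (erlang_density k l x) \<partial>lborel) = 1"
    using nn_integral_erlang_ith_moment[OF l, of k 0] by simp
  have "(\<integral>\<^sup>+x. ennreal (erlang_density k l x) * indicator {..<T} x \<partial>lborel)
      = (\<integral>\<^sup>+x. ennreal (erlang_density k l x) * indicator {..T} x \<partial>lborel)"
    by (intro nn_integral_cong_AE eventually_mono[OF AE_lborel_singleton[of T]])
       (auto split: split_indicator)
  also have "\<dots> = ennreal (erlang_CDF k l T)" by (rule nn_integral_erlang_density[OF l])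
  also have "erlang_CDF k l T = 1 - S" using T by (simp add: erlang_CDF_def S_def mult.commute)
  finally have cdf: "(\<integral>\<^sup>+x. ennreal (erlang_density k l x) * indicator {..<T} x \<partial>lborel) = ennreal (1 - S)" .
  have S0: "0 \<le> S" unfolding S_def using l T by (intro sum_nonneg) auto
  have S1: "0 \<le> 1 - S" using erlang_CDF_nonneg[OF l, of k T] T by (simp add: erlang_CDF_def S_def mult.commute)
  have "(\<integral>\<^sup>+x. ennreal (erlang_density k l x) * indicator {..<T} x \<partial>lborel)
      + (\<integral>\<^sup>+x. ennreal (erlang_density k l x) * indicator {T..} x \<partial>lborel)
      = (\<integral>\<^sup>+x. ennreal (erlang_density k l x) \<partial>lborel)"
    by (subst nn_integral_add[symmetric]) (auto intro!: nn_integral_cong split: split_indicator)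
  hence "ennreal (1 - S) + (\<integral>\<^sup>+x. ennreal (erlang_density k l x) * indicator {T..} x \<partial>lborel)
       = ennreal (1 - S) + ennreal S"
    using cdf tot S0 S1 by (simp add: ennreal_plus[symmetric] del: ennreal_plus)
  thus ?thesis unfolding S_def[symmetric] by (simp add: ennreal_add_left_cancel)
qed

lemma pointwise:
  fixes y b Ps l2 :: real and k1 k2 :: nat
  assumes l2: "0 < l2" and b: "0 < b" and Ps: "0 < Ps"
  defines "L \<equiv> l2 + b*Ps"
  shows "erlang_density k2 l2 y * (\<Sum>n\<le>k1. (b*(Ps*y+1))^n * exp(-(b*(Ps*y+1)))/fact n)
     = (\<Sum>n\<le>k1. \<Sum>j\<le>n. ((n choose j) * Ps^j * b^n * exp(-b) * (l2/L)^Suc k2 / fact n)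
          * (erlang_density k2 L y * y^j))"
proof (cases "y < 0")
  case True thus ?thesis by (simp add: erlang_density_def)
next
  case False
  have L0: "L > 0" using assms by (simp add: L_def add_pos_pos)
  have ed: "erlang_density k2 l2 y * exp(-(b*(Ps*y+1))) = (l2/L)^Suc k2 * exp(-b) * erlang_density k2 L y"
  proof -
    have "exp (-(b*(Ps*y+1))) * exp (-(l2*y)) = exp(-b) * exp(-(L*y))"
      by (simp add: L_def exp_add[symmetric] algebra_simps)
    thus ?thesis using False L0 by (simp add: erlang_density_def power_divide field_simps)
  qed
  have bin: "\<And>n. (b*(Ps*y+1))^n = (\<Sum>j\<le>n. (n choose j) * b^n * Ps^j * y^j)"
  proof -
    fix n
    have "(Ps*y+1)^n = (\<Sum>j\<le>n. of_nat (n choose j) * (Ps*y)^j * 1^(n-j))" by (rule binomial_ring)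
    thus "(b*(Ps*y+1))^n = (\<Sum>j\<le>n. (n choose j) * b^n * Ps^j * y^j)"
      by (simp add: power_mult_distrib sum_distrib_left ac_simps)
  qed
  have "erlang_density k2 l2 y * (\<Sum>n\<le>k1. (b*(Ps*y+1))^n * exp(-(b*(Ps*y+1)))/fact n)
      = (\<Sum>n\<le>k1. (b*(Ps*y+1))^n / fact n * (erlang_density k2 l2 y * exp(-(b*(Ps*y+1)))))"
    by (simp add: sum_distrib_left ac_simps)
  also have "\<dots> = (\<Sum>n\<le>k1. (b*(Ps*y+1))^n / fact n * ((l2/L)^Suc k2 * exp(-b) * erlang_density k2 L y))"
    by (simp only: ed)
  also have "\<dots> = (\<Sum>n\<le>k1. \<Sum>j\<le>n. ((n choose j) * Ps^j * b^n * exp(-b) * (l2/L)^Suc k2 / fact n)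
          * (erlang_density k2 L y * y^j))"
  proof (rule sum.cong[OF refl])
    fix n
    show "(b*(Ps*y+1))^n / fact n * ((l2/L)^Suc k2 * exp(-b) * erlang_density k2 L y) = (\<Sum>j\<le>n. ((n choose j) * Ps^j * b^n * exp(-b) * (l2/L)^Suc k2 / fact n)
          * (erlang_density k2 L y * y^j))"
      unfolding bin by (simp add: sum_distrib_left sum_divide_distrib sum_distrib_right ac_simps)
  qed
  finally show ?thesis .
qed

lemma ed_pow_nonneg: "0 < L \<Longrightarrow> 0 \<le> erlang_density k L y * y^j"
  by (cases "y < 0") (auto simp: erlang_density_def)

lemma outer:
  fixes b Ps l2 :: real and k1 k2 :: nat
  assumes l2: "0 < l2" and b: "0 < b" and Ps: "0 < Ps"
  defines "L \<equiv> l2 + b*Ps"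
  shows "(\<integral>\<^sup>+y. ennreal (erlang_density k2 l2 y * (\<Sum>n\<le>k1. (b*(Ps*y+1))^n * exp(-(b*(Ps*y+1)))/fact n)) \<partial>lborel)
     = ennreal (\<Sum>n\<le>k1. \<Sum>j\<le>n. ((n choose j) * Ps^j * b^n * exp(-b) * (l2/L)^Suc k2 / fact n)
          * (fact (k2 + j) / (fact k2 * L ^ j)))"
proof -
  have L0: "L > 0" using assms by (simp add: L_def add_pos_pos)
  define c where "c n j = (n choose j) * Ps^j * b^n * exp(-b) * (l2/L)^Suc k2 / fact n" for n j :: nat
  have c0: "0 \<le> c n j" for n j using assms L0 by (simp add: c_def)
  have "(\<integral>\<^sup>+y. ennreal (erlang_density k2 l2 y * (\<Sum>n\<le>k1. (b*(Ps*y+1))^n * exp(-(b*(Ps*y+1)))/fact n)) \<partial>lborel)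
      = (\<integral>\<^sup>+y. (\<Sum>n\<le>k1. \<Sum>j\<le>n. ennreal (c n j) * ennreal (erlang_density k2 L y * y^j)) \<partial>lborel)"
  proof (rule nn_integral_cong)
    fix y :: real
    have "erlang_density k2 l2 y * (\<Sum>n\<le>k1. (b*(Ps*y+1))^n * exp(-(b*(Ps*y+1)))/fact n)
       = (\<Sum>n\<le>k1. \<Sum>j\<le>n. c n j * (erlang_density k2 L y * y^j))"
      unfolding c_def L_def by (rule pointwise[OF l2 b Ps])
    thus "ennreal (erlang_density k2 l2 y * (\<Sum>n\<le>k1. (b*(Ps*y+1))^n * exp(-(b*(Ps*y+1)))/fact n))
      = (\<Sum>n\<le>k1. \<Sum>j\<le>n. ennreal (c n j) * ennreal (erlang_density k2 L y * y^j))"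
      using c0 ed_pow_nonneg[OF L0]
      by (simp add: ennreal_mult[symmetric] sum_nonneg mult_nonneg_nonneg)
  qed
  also have "\<dots> = (\<Sum>n\<le>k1. \<Sum>j\<le>n. ennreal (c n j) * (\<integral>\<^sup>+y. ennreal (erlang_density k2 L y * y^j) \<partial>lborel))"
    by (simp add: nn_integral_sum nn_integral_cmult)
  also have "\<dots> = (\<Sum>n\<le>k1. \<Sum>j\<le>n. ennreal (c n j) * ennreal (fact (k2 + j) / (fact k2 * L ^ j)))"
    by (simp add: nn_integral_erlang_ith_moment[OF L0])
  also have "\<dots> = ennreal (\<Sum>n\<le>k1. \<Sum>j\<le>n. c n j * (fact (k2 + j) / (fact k2 * L ^ j)))"
    using c0 L0 by (simp add: ennreal_mult[symmetric] sum_nonneg mult_nonneg_nonneg)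
  finally show ?thesis unfolding c_def .
qed

lemma Gamma_nat: "Gamma (real (Suc n)) = fact n"
  using Gamma_fact[of n] by (simp add: add.commute)

lemma final_alg:
  fixes t b Ps :: real
  assumes t: "t > 0" and b: "b > 0" and Ps: "Ps > 0"
  shows "(\<Sum>n\<le>k1. \<Sum>j\<le>n. (real (n choose j) * Ps^j * b^n * exp(-b) * ((1/t)/(1/t + b*Ps))^Suc k2 / fact n) * (fact (k2+j) / (fact k2 * (1/t + b*Ps)^j)))
  = exp(-b)/(Gamma (real (Suc k2)) * t^Suc k2) * (\<Sum>m<Suc k1. \<Sum>k\<le>m. real(m choose k) * Ps^k * Gamma(real(k+Suc k2)) * b^m / (Gamma(real(m+1)) * (Ps*b + 1/t)^(k+Suc k2)))"
proof -
  have L: "1/t + b*Ps > 0" using assms by (simp add: add_pos_pos)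
  have G1: "Gamma (real (k + Suc k2)) = fact (k2 + k)" for k
    using Gamma_nat[of "k + k2"] by (simp add: add.commute)
  have G2: "Gamma (real (m + 1)) = fact m" for m using Gamma_nat[of m] by simp
  show ?thesis
    unfolding lessThan_Suc_atMost Gamma_nat G1 G2 sum_distrib_left
  proof (intro sum.cong refl)
    fix n j
    show "real (n choose j) * Ps^j * b^n * exp(-b) * ((1/t)/(1/t + b*Ps))^Suc k2 / fact n * (fact (k2+j) / (fact k2 * (1/t + b*Ps)^j))
      = exp(-b)/(fact k2 * t^Suc k2) * (real(n choose j) * Ps^j * fact (k2 + j) * b^n / (fact n * (Ps*b + 1/t)^(j+Suc k2)))"
      using L t by (simp add: power_add power_divide field_simps mult.commute)
  qed
qed

lemma gamma_erlang:
  assumes "m \<ge> 1" "\<theta> > 0"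
  shows "gamma_density m \<theta> = erlang_density (m - 1) (1/\<theta>)"
proof
  fix x
  obtain k where k: "m = Suc k" using assms by (cases m) auto
  show "gamma_density m \<theta> x = erlang_density (m - 1) (1/\<theta>) x"
    using assms unfolding k by (simp add: gamma_density_def erlang_density_def Gamma_nat Gamma_fact power_divide field_simps)
qed

theorem theorem1:
  fixes M :: "'a measure" and G_rd G_sd :: "'a \<Rightarrow> real"
    and m_rd m_sd :: nat and pi_rd pi_sd P_s P_r C_x r :: real
  assumes "prob_space M"
    and "m_rd \<ge> 1" and "m_sd \<ge> 1" and "pi_rd > 0" and "pi_sd > 0"
    and "P_s > 0"
    and "distributed M lborel G_rd (gamma_density m_rd (pi_rd / real m_rd))"
    and "distributed M lborel G_sd (gamma_density m_sd (pi_sd / real m_sd))"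
    and "prob_space.indep_var M borel G_rd borel G_sd"
    and "r > 0" and "P_r > 0" and "0 \<le> C_x" and "C_x < 1"
  shows
    "let \<theta>_rd = pi_rd / real m_rd; \<theta>_sd = pi_sd / real m_sd;
         \<beta> = Psi r C_x / (P_r * \<theta>_rd * (1 - C_x^2))
     in measure M {\<omega> \<in> space M. R_rd P_s P_r C_x (G_rd \<omega>) (G_sd \<omega>) < r}
        = 1 - exp (- \<beta>) / (Gamma (real m_sd) * \<theta>_sd ^ m_sd) *
            (\<Sum>m<m_rd. \<Sum>k\<le>m. real (m choose k) * P_s ^ k * Gamma (real (k + m_sd)) * \<beta> ^ m
               / (Gamma (real (m + 1)) * (P_s * \<beta> + 1 / \<theta>_sd) ^ (k + m_sd)))"
proof -
  interpret P: prob_space M by fact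
  define trd where "trd = pi_rd / real m_rd"
  define tsd where "tsd = pi_sd / real m_sd"
  define \<beta> where "\<beta> = Psi r C_x / (P_r * trd * (1 - C_x^2))"
  obtain k1 where k1: "m_rd = Suc k1" using assms(2) by (cases m_rd) auto
  obtain k2 where k2: "m_sd = Suc k2" using assms(3) by (cases m_sd) auto
  have trd0: "trd > 0" using assms k1 by (simp add: trd_def)
  have tsd0: "tsd > 0" using assms k2 by (simp add: tsd_def)
  have "C_x*C_x \<le> C_x*1" using assms by (intro mult_left_mono) auto
  hence D0: "1 - C_x^2 > 0" using assms by (simp add: power2_eq_square)
  have g0: "gamma_r r > 0" using assms unfolding gamma_r_def using powr_less_mono[of 0 "2*r" "2::real"] by simp
  have "gamma_r r * (1 - C_x^2) > 0" using g0 D0 by simp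
  hence Psi0: "Psi r C_x > 0" unfolding Psi_def by simp
  have \<beta>0: "\<beta> > 0" unfolding \<beta>_def using Psi0 D0 trd0 assms by simp
  define f1 where "f1 = erlang_density k1 (1/trd)"
  define f2 where "f2 = erlang_density k2 (1/tsd)"
  have d1: "distributed M lborel G_rd f1"
    using assms(7) gamma_erlang[OF assms(2) trd0] unfolding f1_def trd_def k1 by simp
  have d2: "distributed M lborel G_sd f2"
    using assms(8) gamma_erlang[OF assms(3) tsd0] unfolding f2_def tsd_def k2 by simp
  have ind: "G_rd \<in> borel_measurable M" "G_sd \<in> borel_measurable M"
    "distr M borel G_rd \<Otimes>\<^sub>M distr M borel G_sd = distr M (borel \<Otimes>\<^sub>M borel) (\<lambda>x. (G_rd x, G_sd x))"
    using assms(9) unfolding P.indep_var_distribution_eq by auto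
  have D1: "distr M borel G_rd = density lborel f1"
  proof -
    have "distr M borel G_rd = distr M lborel G_rd" by (rule distr_cong) auto
    thus ?thesis using d1 unfolding distributed_def by simp
  qed
  have D2: "distr M borel G_sd = density lborel f2"
  proof -
    have "distr M borel G_sd = distr M lborel G_sd" by (rule distr_cong) auto
    thus ?thesis using d2 unfolding distributed_def by simp
  qed
  define S where "S = {p::real\<times>real. \<not> R_rd P_s P_r C_x (fst p) (snd p) < r}"
  have "Measurable.pred (borel \<Otimes>\<^sub>M borel) (\<lambda>p::real\<times>real. \<not> R_rd P_s P_r C_x (fst p) (snd p) < r)"
    unfolding R_rd_def by measurable
  hence Sm: "S \<in> sets (borel \<Otimes>\<^sub>M borel)" unfolding S_def pred_def by (simp add: space_pair_measure)
  interpret Q1: prob_space "density lborel f1" unfolding f1_def by (rule prob_space_erlang_density) (use trd0 in simp)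
  interpret Q2: prob_space "density lborel f2" unfolding f2_def by (rule prob_space_erlang_density) (use tsd0 in simp)
  interpret Q12: pair_prob_space "density lborel f1" "density lborel f2" ..
  define C where "C = {\<omega> \<in> space M. \<not> R_rd P_s P_r C_x (G_rd \<omega>) (G_sd \<omega>) < r}"
  define T where "T y = (P_s*y+1) * Psi r C_x / (P_r*(1-C_x^2))" for y
  define F where "F y = ennreal (\<Sum>n\<le>k1. (\<beta>*(P_s*y+1))^n * exp(-(\<beta>*(P_s*y+1)))/fact n)" for y
  have inner: "(\<integral>\<^sup>+x. indicator S (x,y) \<partial>density lborel f1) = F y" if y0: "y \<ge> 0" for y
  proof -
    have T0: "T y \<ge> 0" unfolding T_def using y0 Psi0 D0 assms by simp
    have "(\<integral>\<^sup>+x. indicator S (x,y) \<partial>density lborel f1) = (\<integral>\<^sup>+x. indicator {T y..} x \<partial>density lborel f1)"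
    proof (rule nn_integral_cong_AE)
      have m1: "(\<lambda>x. ennreal (f1 x)) \<in> borel_measurable lborel" unfolding f1_def by simp
      have aux: "indicator S (x, y) = (indicator {T y..} x :: ennreal)" if "ennreal (f1 x) \<noteq> 0" for x
      proof -
        from that have x0: "x \<ge> 0" unfolding f1_def erlang_density_def by (auto split: if_splits)
        show ?thesis
          using key_R[OF x0 y0 assms(6) assms(11) assms(12) assms(13) assms(10)]
          unfolding S_def T_def by (auto split: split_indicator)
      qed
      show "AE x in density lborel f1. indicator S (x,y) = (indicator {T y..} x :: ennreal)"
        using aux by (subst AE_density[OF m1]) (auto intro!: AE_I2)
    qed
    also have "\<dots> = (\<integral>\<^sup>+x. ennreal (f1 x) * indicator {T y..} x \<partial>lborel)"
      by (subst nn_integral_density) (auto simp: f1_def)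
    also have "\<dots> = ennreal (\<Sum>n\<le>k1. ((1/trd)*T y)^n * exp(-((1/trd)*T y))/fact n)"
      unfolding f1_def by (rule erlang_tail) (use trd0 T0 in auto)
    also have "(1/trd)*T y = \<beta>*(P_s*y+1)" unfolding T_def \<beta>_def using trd0 D0 assms by (simp add: field_simps)
    finally show ?thesis unfolding F_def .
  qed
  have Ceq: "C = (\<lambda>x. (G_rd x, G_sd x)) -` S \<inter> space M" by (auto simp: C_def S_def)
  have "emeasure M C = emeasure (distr M (borel \<Otimes>\<^sub>M borel) (\<lambda>x. (G_rd x, G_sd x))) S"
    unfolding Ceq using Sm ind by (subst emeasure_distr) (auto intro: measurable_Pair)
  also have "\<dots> = emeasure (density lborel f1 \<Otimes>\<^sub>M density lborel f2) S"
    using ind D1 D2 by simp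
  also have "\<dots> = (\<integral>\<^sup>+p. indicator S p \<partial>(density lborel f1 \<Otimes>\<^sub>M density lborel f2))"
    using Sm by (subst nn_integral_indicator) (auto cong: sets_pair_measure_cong)
  also have "\<dots> = (\<integral>\<^sup>+y. (\<integral>\<^sup>+x. indicator S (x,y) \<partial>density lborel f1) \<partial>density lborel f2)"
    using Sm by (subst Q12.nn_integral_snd) (auto cong: sets_pair_measure_cong)
  also have "\<dots> = (\<integral>\<^sup>+y. F y \<partial>density lborel f2)"
  proof (rule nn_integral_cong_AE)
    have m2: "(\<lambda>x. ennreal (f2 x)) \<in> borel_measurable lborel" unfolding f2_def by simp
    have aux: "(\<integral>\<^sup>+x. indicator S (x,y) \<partial>density lborel f1) = F y" if "ennreal (f2 y) \<noteq> 0" for y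
    proof -
      from that have y0: "y \<ge> 0" unfolding f2_def erlang_density_def by (auto split: if_splits)
      show ?thesis by (rule inner[OF y0])
    qed
    show "AE y in density lborel f2. (\<integral>\<^sup>+x. indicator S (x,y) \<partial>density lborel f1) = F y"
      using aux by (subst AE_density[OF m2]) (auto intro!: AE_I2)
  qed
  also have "\<dots> = (\<integral>\<^sup>+y. ennreal (f2 y) * F y \<partial>lborel)"
  proof -
    have Fm: "F \<in> borel_measurable borel" unfolding F_def by measurable
    show ?thesis using Fm by (subst nn_integral_density) (auto simp: f2_def)
  qed
  also have "\<dots> = (\<integral>\<^sup>+y. ennreal (erlang_density k2 (1/tsd) y * (\<Sum>n\<le>k1. (\<beta>*(P_s*y+1))^n * exp(-(\<beta>*(P_s*y+1)))/fact n)) \<partial>lborel)"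
  proof (rule nn_integral_cong)
    fix y :: real
    have nn: "0 \<le> (\<Sum>n\<le>k1. (\<beta>*(P_s*y+1))^n * exp(-(\<beta>*(P_s*y+1)))/fact n)" if "y \<ge> 0"
      using that \<beta>0 assms by (intro sum_nonneg) auto
    show "ennreal (f2 y) * F y = ennreal (erlang_density k2 (1/tsd) y * (\<Sum>n\<le>k1. (\<beta>*(P_s*y+1))^n * exp(-(\<beta>*(P_s*y+1)))/fact n))"
    proof (cases "y < 0")
      case True thus ?thesis unfolding F_def f2_def by (simp add: erlang_density_def)
    next
      case False
      hence h: "0 \<le> (\<Sum>n\<le>k1. (\<beta>*(P_s*y+1))^n * exp(-(\<beta>*(P_s*y+1)))/fact n)" using nn by simp
      show ?thesis unfolding F_def f2_def by (subst ennreal_mult''[OF h]) simp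
    qed
  qed
  also have "\<dots> = ennreal (\<Sum>n\<le>k1. \<Sum>j\<le>n. ((n choose j) * P_s^j * \<beta>^n * exp(-\<beta>) * ((1/tsd)/(1/tsd + \<beta>*P_s))^Suc k2 / fact n)
          * (fact (k2 + j) / (fact k2 * (1/tsd + \<beta>*P_s) ^ j)))"
    by (rule outer) (use tsd0 \<beta>0 assms in auto)
  also have "\<dots> = ennreal (exp(-\<beta>)/(Gamma (real (Suc k2)) * tsd^Suc k2) * (\<Sum>m<Suc k1. \<Sum>k\<le>m. real(m choose k) * P_s^k * Gamma(real(k+Suc k2)) * \<beta>^m / (Gamma(real(m+1)) * (P_s*\<beta> + 1/tsd)^(k+Suc k2))))"
    by (subst final_alg) (use tsd0 \<beta>0 assms in auto)
  finally have emC: "emeasure M C = ennreal (exp(-\<beta>)/(Gamma (real m_sd) * tsd^m_sd) * (\<Sum>m<m_rd. \<Sum>k\<le>m. real(m choose k) * P_s^k * Gamma(real(k+m_sd)) * \<beta>^m / (Gamma(real(m+1)) * (P_s*\<beta> + 1/tsd)^(k+m_sd))))"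
    unfolding k1 k2 .
  define Qv where "Qv = exp(-\<beta>)/(Gamma (real m_sd) * tsd^m_sd) * (\<Sum>m<m_rd. \<Sum>k\<le>m. real(m choose k) * P_s^k * Gamma(real(k+m_sd)) * \<beta>^m / (Gamma(real(m+1)) * (P_s*\<beta> + 1/tsd)^(k+m_sd)))"
  have Q0: "Qv \<ge> 0" unfolding Qv_def k2 using \<beta>0 tsd0 assms
    by (intro mult_nonneg_nonneg sum_nonneg divide_nonneg_nonneg) (auto simp: Gamma_nat Gamma_real_pos)
  have mC: "measure M C = Qv"
    using emC Q0 unfolding Qv_def[symmetric] by (simp add: P.emeasure_eq_measure)
  define E where "E = {\<omega> \<in> space M. R_rd P_s P_r C_x (G_rd \<omega>) (G_sd \<omega>) < r}"
  have Em: "E \<in> P.events"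
  proof -
    have cS: "UNIV - S \<in> sets (borel \<Otimes>\<^sub>M borel)" using sets.compl_sets[OF Sm] by (simp add: space_pair_measure)
    have "E = (\<lambda>x. (G_rd x, G_sd x)) -` (UNIV - S) \<inter> space M" unfolding E_def S_def by auto
    also have "\<dots> \<in> P.events" using cS ind by (intro measurable_sets[OF measurable_Pair]) (auto simp: space_pair_measure)
    finally show ?thesis .
  qed
  have "C = space M - E" unfolding C_def E_def by auto
  hence "measure M E = 1 - Qv" using mC P.prob_compl[OF Em] by simp
  thus ?thesis unfolding Let_def trd_def[symmetric] tsd_def[symmetric] \<beta>_def[symmetric] E_def Qv_def .
qed

end
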